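(* Let $V$ be a set of $n$ points in $\mathbb{R}^2$, $O\in\mathbb{R}^2$, and $M,k$ positive integers. Sort $V$ as $u_1,\dots,u_n$ with $\theta(u_1)\le\cdots\le\theta(u_n)$, and for $1\le i\le\lceil n/(Mk)\rceil$ let $V_i=\{u_j:(i-1)Mk<j\le iMk\}$. Define $Y_i$ as follows: if $\max_{v\in V_i}\theta(v)-\min_{v\in V_i}\theta(v)\le\pi$, let $Y_i$ be the interior of the convex hull of $V_i\cup\{O\}$; otherwise let $Y_i$ be the exterior of the convex hull of $(V\setminus V_i)\cup\{O\}$. Then for any $1\le i<j\le\lceil n/(Mk)\rceil$, the sets $Y_i$ and $Y_j$ do not intersect.
   Context: $\theta(v)\in[0,2\pi)$ denotes the polar angle of the point $v$ with respect to $O$. *)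

theory Defs
  imports "HOL-Analysis.Analysis"
begin

text \<open>The plane R^2 is modelled as the type complex. Polar angle of v with
respect to the origin point c (O in the paper), normalised to [0, 2*pi). (For v = c this gives 0, since Arg 0 = 0.)\<close>
definition theta :: "complex \<Rightarrow> complex \<Rightarrow> real" where
  "theta c v = (if Arg (v - c) < 0 then Arg (v - c) + 2 * pi else Arg (v - c))"

definition block :: "(nat \<Rightarrow> complex) \<Rightarrow> nat \<Rightarrow> nat \<Rightarrow> nat \<Rightarrow> nat \<Rightarrow> complex set" where
  "block u n M k i = u ` {j. 1 \<le> j \<and> j \<le> n \<and> (i - 1) * M * k < j \<and> j \<le> i * M * k}"

text \<open>The region Y_i; the exterior of a set is the complement of its closure.\<close>
definition Yset :: "complex set \<Rightarrow> complex \<Rightarrow> (nat \<Rightarrow> complex) \<Rightarrow> nat \<Rightarrow> nat \<Rightarrow> nat \<Rightarrow> nat \<Rightarrow> complex set" where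
  "Yset V c u n M k i =
    (let Vi = block u n M k i in
     if (MAX v\<in>Vi. theta c v) - (MIN v\<in>Vi. theta c v) \<le> pi
     then interior (convex hull (Vi \<union> {c}))
     else - closure (convex hull ((V - Vi) \<union> {c})))"

end

theory Submission
  imports Defs
begin

lemma theta_range: "0 \<le> theta c v \<and> theta c v < 2 * pi"
  using Arg_bounded[of "v - c"] by (auto simp: theta_def)

lemma theta_rep: "v - c = complex_of_real (cmod (v - c)) * cis (theta c v)"
proof -
  have "cis (theta c v) = cis (Arg (v - c))"
    by (simp add: theta_def cis.ctr complex_eq_iff)
  then show ?thesis using rcis_cmod_Arg[of "v - c"] by (simp add: rcis_def)
qed

lemma inner_theta:
  "inner (\<i> * cis p) (v - c) = cmod (v - c) * sin (theta c v - p)"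
proof -
  have "inner (\<i> * cis p) (v - c) = inner (\<i> * cis p) (complex_of_real (cmod (v - c)) * cis (theta c v))"
    using theta_rep[of v c] by simp
  also have "\<dots> = cmod (v - c) * sin (theta c v - p)"
    by (simp add: inner_complex_def sin_diff algebra_simps)
  finally show ?thesis .
qed

lemma sectors_disjoint:
  assumes "finite A" "finite B" "A \<noteq> {}" "B \<noteq> {}"
    and ord: "\<And>v w. v \<in> A \<Longrightarrow> w \<in> B \<Longrightarrow> theta c v \<le> theta c w"
    and sA: "(MAX v\<in>A. theta c v) - (MIN v\<in>A. theta c v) \<le> pi"
    and sB: "(MAX v\<in>B. theta c v) - (MIN v\<in>B. theta c v) \<le> pi"
  shows "interior (convex hull (A \<union> {c})) \<inter> interior (convex hull (B \<union> {c})) = {}"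
proof -
  define a where "a = (MIN v\<in>A. theta c v)"
  define b where "b = (MAX v\<in>A. theta c v)"
  define a' where "a' = (MIN v\<in>B. theta c v)"
  define b' where "b' = (MAX v\<in>B. theta c v)"
  have inA: "a \<le> theta c v \<and> theta c v \<le> b" if "v \<in> A" for v
    using that assms(1) by (auto simp: a_def b_def)
  have inB: "a' \<le> theta c v \<and> theta c v \<le> b'" if "v \<in> B" for v
    using that assms(2) by (auto simp: a'_def b'_def)
  obtain vb where vb: "vb \<in> A" "b = theta c vb"
    using assms(1,3) unfolding b_def by (metis (no_types, lifting) Max_in finite_imageI image_iff image_is_empty)
  obtain va where va: "va \<in> A" "a = theta c va"
    using assms(1,3) unfolding a_def by (metis (no_types, lifting) Min_in finite_imageI image_iff image_is_empty)
  obtain wa where wa: "wa \<in> B" "a' = theta c wa"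
    using assms(2,4) unfolding a'_def by (metis (no_types, lifting) Min_in finite_imageI image_iff image_is_empty)
  obtain wb where wb: "wb \<in> B" "b' = theta c wb"
    using assms(2,4) unfolding b'_def by (metis (no_types, lifting) Max_in finite_imageI image_iff image_is_empty)
  have ba: "b \<le> a'" using ord vb wa by auto
  have a0: "a \<ge> 0" using va theta_range by auto
  have b2: "b' < 2 * pi" using wb theta_range by auto
  have sA': "b - a \<le> pi" using sA a_def b_def by simp
  have sB': "b' - a' \<le> pi" using sB a'_def b'_def by simp
  define p where "p = min a (a' - pi)"
  define d where "d = \<i> * cis p"
  have d0: "d \<noteq> 0" by (simp add: d_def)
  have HA: "convex hull (A \<union> {c}) \<subseteq> {x. d \<bullet> x \<ge> d \<bullet> c}"
  proof (rule hull_minimal)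
    show "convex {x. d \<bullet> x \<ge> d \<bullet> c}" by (rule convex_halfspace_ge)
    show "A \<union> {c} \<subseteq> {x. d \<bullet> x \<ge> d \<bullet> c}"
    proof
      fix v assume "v \<in> A \<union> {c}"
      then show "v \<in> {x. d \<bullet> x \<ge> d \<bullet> c}"
      proof
        assume v: "v \<in> A"
        have "0 \<le> theta c v - p" "theta c v - p \<le> pi"
          using inA[OF v] sA' ba unfolding p_def by auto
        then have "0 \<le> sin (theta c v - p)" by (rule sin_ge_zero)
        then have "0 \<le> d \<bullet> (v - c)" unfolding d_def inner_theta by simp
        then show ?thesis by (simp add: inner_diff_right)
      qed simp
    qed
  qed
  have HB: "convex hull (B \<union> {c}) \<subseteq> {x. d \<bullet> x \<le> d \<bullet> c}"
  proof (rule hull_minimal)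
    show "convex {x. d \<bullet> x \<le> d \<bullet> c}" by (rule convex_halfspace_le)
    show "B \<union> {c} \<subseteq> {x. d \<bullet> x \<le> d \<bullet> c}"
    proof
      fix v assume "v \<in> B \<union> {c}"
      then show "v \<in> {x. d \<bullet> x \<le> d \<bullet> c}"
      proof
        assume v: "v \<in> B"
        have t: "theta c v < 2 * pi" "0 \<le> theta c v" using theta_range by auto
        have "pi \<le> theta c v - p" "theta c v - p \<le> 2 * pi"
          using inB[OF v] sB' ba a0 b2 t unfolding p_def by auto
        then have "sin (theta c v - p) \<le> 0"
          by (metis less_eq_real_def sin_le_zero sin_two_pi)
        then have "d \<bullet> (v - c) \<le> 0" unfolding d_def inner_theta
          by (simp add: mult_nonneg_nonpos)
        then show ?thesis by (simp add: inner_diff_right)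
      qed simp
    qed
  qed
  have "interior (convex hull (A \<union> {c})) \<subseteq> {x. d \<bullet> x > d \<bullet> c}"
    using interior_mono[OF HA] d0 by simp
  moreover have "interior (convex hull (B \<union> {c})) \<subseteq> {x. d \<bullet> x < d \<bullet> c}"
    using interior_mono[OF HB] d0 by simp
  ultimately show ?thesis by force
qed

lemma block_nonempty:
  assumes "M > 0" "k > 0" "1 \<le> j" "j \<le> nat \<lceil>real n / real (M * k)\<rceil>"
  shows "u ((j - 1) * M * k + 1) \<in> block u n M k j"
proof -
  have "real j \<le> real_of_int \<lceil>real n / real (M * k)\<rceil>" using assms(3,4) by linarith
  also have "\<dots> < real n / real (M * k) + 1" by linarith
  finally have "real (j - 1) < real n / real (M * k)" using assms(3) by (simp add: of_nat_diff)
  then have "real (j - 1) * real (M * k) < real n" using assms(1,2) by (simp add: field_simps)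
  then have "(j - 1) * (M * k) < n" by (metis of_nat_less_iff of_nat_mult)
  then have "(j - 1) * M * k + 1 \<le> n" by (simp add: mult.assoc)
  moreover have "(j - 1) * M * k + 1 \<le> j * M * k"
  proof -
    obtain t where t: "j = Suc t" using assms(3) by (cases j) auto
    have "(j - 1) * M * k + M * k = j * M * k" unfolding t by (simp add: algebra_simps)
    moreover have "1 \<le> M * k" using assms(1,2) by simp
    ultimately show ?thesis by linarith
  qed
  ultimately show ?thesis unfolding block_def by auto
qed

theorem lemma12:
  fixes V :: "complex set" and c :: complex and M k n i j :: nat and u :: "nat \<Rightarrow> complex"
  assumes "finite V" and "card V = n"
    and "M > 0" and "k > 0"
    and "bij_betw u {1..n} V"
    and "\<And>a b. 1 \<le> a \<Longrightarrow> a \<le> b \<Longrightarrow> b \<le> n \<Longrightarrow> theta c (u a) \<le> theta c (u b)"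
    and "1 \<le> i" and "i < j" and "j \<le> nat \<lceil>real n / real (M * k)\<rceil>"
  shows "Yset V c u n M k i \<inter> Yset V c u n M k j = {}"
proof -
  define A where "A = block u n M k i"
  define B where "B = block u n M k j"
  have fA: "finite A" and fB: "finite B" unfolding A_def B_def block_def by auto
  have neA: "A \<noteq> {}" using block_nonempty[of M k i n u] assms unfolding A_def by auto
  have neB: "B \<noteq> {}" using block_nonempty[of M k j n u] assms unfolding B_def by auto
  have le: "i * M * k \<le> (j - 1) * M * k"
    using assms(8) by (intro mult_le_mono1) simp
  have ord: "theta c v \<le> theta c w" if vw: "v \<in> A" "w \<in> B" for v w
  proof -
    obtain a where a: "v = u a" "1 \<le> a" "a \<le> i * M * k" using vw(1) unfolding A_def block_def by auto
    obtain b where b: "w = u b" "(j - 1) * M * k < b" "b \<le> n" using vw(2) unfolding B_def block_def by auto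
    show ?thesis using assms(6)[of a b] a b le by simp
  qed
  have inj: "inj_on u {1..n}" and img: "u ` {1..n} = V" using assms(5) by (auto simp: bij_betw_def)
  have AV: "A \<subseteq> V - B"
  proof
    fix v assume v: "v \<in> A"
    obtain a where a: "v = u a" "1 \<le> a" "a \<le> n" "a \<le> i * M * k" using v unfolding A_def block_def by auto
    have "v \<notin> B"
    proof
      assume "v \<in> B"
      then obtain b where b: "v = u b" "1 \<le> b" "(j - 1) * M * k < b" "b \<le> n" unfolding B_def block_def by auto
      have "a = b" using inj a b by (auto dest: inj_onD)
      then show False using a b le by simp
    qed
    moreover have "v \<in> V" using a img by auto
    ultimately show "v \<in> V - B" by simp
  qed
  have BV: "B \<subseteq> V - A"
  proof
    fix v assume v: "v \<in> B"
    obtain b where b: "v = u b" "1 \<le> b" "(j - 1) * M * k < b" "b \<le> n" using v unfolding B_def block_def by auto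
    have "v \<notin> A"
    proof
      assume "v \<in> A"
      then obtain a where a: "v = u a" "1 \<le> a" "a \<le> n" "a \<le> i * M * k" unfolding A_def block_def by auto
      have "a = b" using inj a b by (auto dest: inj_onD)
      then show False using a b le by simp
    qed
    moreover have "v \<in> V" using b img by auto
    ultimately show "v \<in> V - A" by simp
  qed
  have sub1: "interior (convex hull (A \<union> {c})) \<subseteq> closure (convex hull ((V - B) \<union> {c}))"
    by (meson AV Un_mono hull_mono interior_subset closure_subset order_refl subset_trans)
  have sub2: "interior (convex hull (B \<union> {c})) \<subseteq> closure (convex hull ((V - A) \<union> {c}))"
    by (meson BV Un_mono hull_mono interior_subset closure_subset order_refl subset_trans)
  obtain vb where vb: "vb \<in> A" "(MAX v\<in>A. theta c v) = theta c vb"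
    using fA neA by (metis (no_types, lifting) Max_in finite_imageI image_iff image_is_empty)
  obtain va where va: "va \<in> A" "(MIN v\<in>A. theta c v) = theta c va"
    using fA neA by (metis (no_types, lifting) Min_in finite_imageI image_iff image_is_empty)
  obtain wa where wa: "wa \<in> B" "(MIN v\<in>B. theta c v) = theta c wa"
    using fB neB by (metis (no_types, lifting) Min_in finite_imageI image_iff image_is_empty)
  obtain wb where wb: "wb \<in> B" "(MAX v\<in>B. theta c v) = theta c wb"
    using fB neB by (metis (no_types, lifting) Max_in finite_imageI image_iff image_is_empty)
  have notboth: "\<not> ((MAX v\<in>A. theta c v) - (MIN v\<in>A. theta c v) > pi \<and>
                     (MAX v\<in>B. theta c v) - (MIN v\<in>B. theta c v) > pi)"
    using ord[OF vb(1) wa(1)] theta_range[of c va] theta_range[of c wb] vb va wa wb by auto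
  have dis: "interior (convex hull (A \<union> {c})) \<inter> interior (convex hull (B \<union> {c})) = {}"
    if "(MAX v\<in>A. theta c v) - (MIN v\<in>A. theta c v) \<le> pi"
       "(MAX v\<in>B. theta c v) - (MIN v\<in>B. theta c v) \<le> pi"
    using sectors_disjoint[OF fA fB neA neB ord that] by blast
  have Y: "Yset V c u n M k i = (if (MAX v\<in>A. theta c v) - (MIN v\<in>A. theta c v) \<le> pi
     then interior (convex hull (A \<union> {c})) else - closure (convex hull ((V - A) \<union> {c})))"
     "Yset V c u n M k j = (if (MAX v\<in>B. theta c v) - (MIN v\<in>B. theta c v) \<le> pi
     then interior (convex hull (B \<union> {c})) else - closure (convex hull ((V - B) \<union> {c})))"
    unfolding Yset_def Let_def A_def B_def by simp_all
  show ?thesis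
  proof (cases "(MAX v\<in>A. theta c v) - (MIN v\<in>A. theta c v) \<le> pi")
    case T1: True
    show ?thesis
    proof (cases "(MAX v\<in>B. theta c v) - (MIN v\<in>B. theta c v) \<le> pi")
      case True
      then show ?thesis unfolding Y using T1 dis by simp
    next
      case False
      then show ?thesis unfolding Y using T1 sub1 by auto
    qed
  next
    case F1: False
    then have T2: "(MAX v\<in>B. theta c v) - (MIN v\<in>B. theta c v) \<le> pi" using notboth by linarith
    show ?thesis unfolding Y using F1 T2 sub2 by auto
  qed
qed

end
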